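(* Let $0<R_\oplus<R_{\mathrm{LEO}}<R_{\mathrm{GEO}}$. Let $N_{\mathrm{LEO}}\ge1$ LEO satellites be i.i.d. uniform on the sphere of radius $R_{\mathrm{LEO}}$, let the IoT device be at $(R_\oplus,0,0)$ and the GEO satellite at $(R_{\mathrm{GEO}},\Theta,0)$ with $\Theta\in(0,\pi)$. The relay is the LEO satellite nearest to the IoT device; let $\theta_{\mathrm{IL}}$ be its central angle to the IoT device and $l_{\mathrm{LG}}$ its distance to the GEO satellite. Let $l_{\mathrm{IL}}^{\max}\in[R_{\mathrm{LEO}}-R_\oplus,\sqrt{R_{\mathrm{LEO}}^2-R_\oplus^2}]$, $l_{\mathrm{LG}}^{\max}>0$, and $\theta_{\mathrm{IL}}^{\max}=\arccos\left(\frac{R_{\mathrm{LEO}}^2+R_\oplus^2-(l_{\mathrm{IL}}^{\max})^2}{2R_{\mathrm{LEO}}R_\oplus}\right)$. Then the satellite availability probability $P^A=\mathbb P[\theta_{\mathrm{IL}}\le\theta_{\mathrm{IL}}^{\max},\ l_{\mathrm{LG}}\le l_{\mathrm{LG}}^{\max}]$ equals $$P^A=\int_0^{\theta_{\mathrm{IL}}^{\max}} f_{\theta_{\mathrm{IL}}}(\theta)\,P_{\mathrm{LG}}^A(\theta)\,d\theta,\qquad f_{\theta_{\mathrm{IL}}}(\theta)=\frac{N_{\mathrm{LEO}}\sin\theta}{2}\left(\frac{1+\cos\theta}{2}\right)^{N_{\mathrm{LEO}}-1},$$ where $P_{\mathrm{LG}}^A(\theta)=\mathbb P[l_{\mathrm{LG}}\le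 l_{\mathrm{LG}}^{\max}\mid\theta_{\mathrm{IL}}=\theta]$ is given, for $\theta\in(0,\pi)$, with $d_1(\theta)=\sqrt{R_{\mathrm{LEO}}^2+R_{\mathrm{GEO}}^2-2R_{\mathrm{LEO}}R_{\mathrm{GEO}}\cos(\theta-\Theta)}$ and $d_2(\theta)=\sqrt{R_{\mathrm{LEO}}^2+R_{\mathrm{GEO}}^2-2R_{\mathrm{LEO}}R_{\mathrm{GEO}}\cos(\theta+\Theta)}$, by $$P_{\mathrm{LG}}^A(\theta)=\begin{cases}0,& d_1(\theta)>l_{\mathrm{LG}}^{\max},\\ 1,& d_2(\theta)<l_{\mathrm{LG}}^{\max},\\ \frac1\pi\arccos\left(\frac{R_{\mathrm{LEO}}^2+R_{\mathrm{GEO}}^2-(l_{\mathrm{LG}}^{\max})^2}{2R_{\mathrm{LEO}}R_{\mathrm{GEO}}\sin\theta\sin\Theta}-\frac{\cos\theta\cos\Theta}{\sin\theta\sin\Theta}\right),&\text{otherwise.}\end{cases}$$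
   Context: Spherical coordinates $(r,\theta,\varphi)$ with origin at the Earth's center, $\theta$ polar angle, $\varphi$ azimuth. The central angle between two points is the angle at the origin between the rays to them. The relay (nearest LEO satellite) is the one with the smallest central angle to the IoT device; conditionally on its polar angle $\theta$, its azimuth is uniform. The distance between $(R_1,\theta_1,\varphi_1)$ and $(R_2,\theta_2,\varphi_2)$ is $\sqrt{R_1^2+R_2^2-2R_1R_2(\sin\theta_1\sin\theta_2\cos(\varphi_1-\varphi_2)+\cos\theta_1\cos\theta_2)}$. *)

theory Defs
  imports "HOL-Probability.Probability"
begin

text \<open>A point on a sphere of fixed radius is described by its spherical angles
  (polar angle, azimuth).  The uniform (normalised surface area) distribution on a
  sphere, in these coordinates, is the normalised area element
  sin theta dtheta dphi / (4 pi) on [0,pi] x [0,2pi).\<close>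

definition sphere_uniform :: "(real \<times> real) measure" where
  "sphere_uniform = density lborel
     (\<lambda>(\<theta>, \<phi>). indicator ({0..pi} \<times> {0..<2*pi}) (\<theta>, \<phi>) * ennreal (sin \<theta> / (4*pi)))"

definition leo_sats :: "nat \<Rightarrow> (nat \<Rightarrow> real \<times> real) measure" where
  "leo_sats N = PiM {..<N} (\<lambda>_. sphere_uniform)"

definition central_angle :: "real \<times> real \<Rightarrow> real \<times> real \<Rightarrow> real" where
  "central_angle p q = arccos (sin (fst p) * sin (fst q) * cos (snd p - snd q)
                               + cos (fst p) * cos (fst q))"

definition sph_dist :: "real \<Rightarrow> real \<times> real \<Rightarrow> real \<Rightarrow> real \<times> real \<Rightarrow> real" where
  "sph_dist R1 p R2 q = sqrt (R1\<^sup>2 + R2\<^sup>2 - 2 * R1 * R2 *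
      (sin (fst p) * sin (fst q) * cos (snd p - snd q) + cos (fst p) * cos (fst q)))"

text \<open>Index of the relay: the LEO satellite with smallest central angle to the IoT device,
  which sits at angles (0,0). Ties (a null event) are broken by smallest index.\<close>
definition relay :: "nat \<Rightarrow> (nat \<Rightarrow> real \<times> real) \<Rightarrow> nat" where
  "relay N \<omega> = (LEAST i. i < N \<and> (\<forall>j<N. central_angle (0,0) (\<omega> i) \<le> central_angle (0,0) (\<omega> j)))"

definition f_theta_IL :: "nat \<Rightarrow> real \<Rightarrow> real" where
  "f_theta_IL N \<theta> = real N * sin \<theta> / 2 * ((1 + cos \<theta>) / 2) ^ (N - 1)"

definition P_LG :: "real \<Rightarrow> real \<Rightarrow> real \<Rightarrow> real \<Rightarrow> real \<Rightarrow> real" where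
  "P_LG RL RG \<Theta> lmax \<theta> =
     (let d1 = sqrt (RL\<^sup>2 + RG\<^sup>2 - 2 * RL * RG * cos (\<theta> - \<Theta>));
          d2 = sqrt (RL\<^sup>2 + RG\<^sup>2 - 2 * RL * RG * cos (\<theta> + \<Theta>))
      in if d1 > lmax then 0
         else if d2 < lmax then 1
         else arccos ((RL\<^sup>2 + RG\<^sup>2 - lmax\<^sup>2) / (2 * RL * RG * sin \<theta> * sin \<Theta>)
                      - cos \<theta> * cos \<Theta> / (sin \<theta> * sin \<Theta>)) / pi)"

end

theory Submission
  imports Defs
begin


lemma su_nn:
  assumes fm[measurable]: "f \<in> borel_measurable (borel \<Otimes>\<^sub>M borel)"
  shows "(\<integral>\<^sup>+y. f y \<partial>sphere_uniform) =
    (\<integral>\<^sup>+\<theta>. \<integral>\<^sup>+\<phi>. indicator ({0..pi} \<times> {0..<2*pi}) (\<theta>, \<phi>) * ennreal (sin \<theta> / (4*pi)) * f (\<theta>, \<phi>) \<partial>lborel \<partial>lborel)"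
proof -
  have dm: "(\<lambda>(\<theta>, \<phi>). indicator ({0..pi} \<times> {0..<2*pi}) (\<theta>, \<phi>) * ennreal (sin \<theta> / (4*pi))) \<in> borel_measurable (borel \<Otimes>\<^sub>M borel)"
    by measurable
  have "(\<integral>\<^sup>+y. f y \<partial>sphere_uniform) = (\<integral>\<^sup>+y. (\<lambda>(\<theta>, \<phi>). indicator ({0..pi} \<times> {0..<2*pi}) (\<theta>, \<phi>) * ennreal (sin \<theta> / (4*pi))) y * f y \<partial>lborel)"
    unfolding sphere_uniform_def using dm fm by (subst nn_integral_density) (auto simp: borel_prod)
  also have "\<dots> = (\<integral>\<^sup>+y. (\<lambda>(\<theta>, \<phi>). indicator ({0..pi} \<times> {0..<2*pi}) (\<theta>, \<phi>) * ennreal (sin \<theta> / (4*pi))) y * f y \<partial>(lborel \<Otimes>\<^sub>M lborel))"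
    by (simp add: lborel_prod)
  also have "\<dots> = (\<integral>\<^sup>+\<theta>. \<integral>\<^sup>+\<phi>. indicator ({0..pi} \<times> {0..<2*pi}) (\<theta>, \<phi>) * ennreal (sin \<theta> / (4*pi)) * f (\<theta>, \<phi>) \<partial>lborel \<partial>lborel)"
    using fm dm by (subst lborel.nn_integral_fst[symmetric]) (auto simp: lborel_prod borel_prod)
  finally show ?thesis .
qed

lemma su_nn_fst:
  assumes [measurable]: "g \<in> borel_measurable borel"
  shows "(\<integral>\<^sup>+y. g (fst y) \<partial>sphere_uniform) =
    (\<integral>\<^sup>+\<theta>. indicator {0..pi} \<theta> * ennreal (sin \<theta> / 2) * g \<theta> \<partial>lborel)"
proof -
  have "(\<integral>\<^sup>+y. g (fst y) \<partial>sphere_uniform) =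
    (\<integral>\<^sup>+\<theta>. \<integral>\<^sup>+\<phi>. indicator ({0..pi} \<times> {0..<2*pi}) (\<theta>, \<phi>) * ennreal (sin \<theta> / (4*pi)) * g \<theta> \<partial>lborel \<partial>lborel)"
    by (subst su_nn) auto
  also have "\<dots> = (\<integral>\<^sup>+\<theta>. indicator {0..pi} \<theta> * ennreal (sin \<theta> / 2) * g \<theta> \<partial>lborel)"
  proof (rule nn_integral_cong)
    fix \<theta> :: real
    have "(\<integral>\<^sup>+\<phi>. indicator ({0..pi} \<times> {0..<2*pi}) (\<theta>, \<phi>) * ennreal (sin \<theta> / (4*pi)) * g \<theta> \<partial>lborel)
      = (\<integral>\<^sup>+\<phi>. (indicator {0..pi} \<theta> * ennreal (sin \<theta> / (4*pi)) * g \<theta>) * indicator {0..<2*pi} \<phi> \<partial>lborel)"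
      by (intro nn_integral_cong) (simp add: indicator_times mult_ac)
    also have "\<dots> = indicator {0..pi} \<theta> * ennreal (sin \<theta> / (4*pi)) * g \<theta> * ennreal (2*pi)"
      by (subst nn_integral_cmult_indicator) auto
    also have "\<dots> = indicator {0..pi} \<theta> * ennreal (sin \<theta> / 2) * g \<theta>"
    proof (cases "\<theta> \<in> {0..pi}")
      case True
      then have "sin \<theta> \<ge> 0" by (auto intro: sin_ge_zero)
      then have "ennreal (sin \<theta> / (4*pi)) * ennreal (2*pi) = ennreal (sin \<theta> / 2)"
        by (subst ennreal_mult[symmetric]) (auto simp: field_simps)
      then show ?thesis by (simp add: mult_ac)
    qed simp
    finally show "(\<integral>\<^sup>+\<phi>. indicator ({0..pi} \<times> {0..<2*pi}) (\<theta>, \<phi>) * ennreal (sin \<theta> / (4*pi)) * g \<theta> \<partial>lborel) = indicator {0..pi} \<theta> * ennreal (sin \<theta> / 2) * g \<theta>" .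
  qed
  finally show ?thesis .
qed

lemma ac_meas[measurable]: "(\<lambda>\<theta>::real. arccos (cos \<theta>)) \<in> borel_measurable borel"
  by (intro borel_measurable_continuous_onI continuous_intros) auto

lemma sets_su[simp, measurable_cong]: "sets sphere_uniform = sets borel"
  by (simp add: sphere_uniform_def)

lemma space_su[simp]: "space sphere_uniform = UNIV"
  by (simp add: sphere_uniform_def)

lemma su_emeasure_fst:
  assumes [measurable]: "S \<in> sets borel"
  shows "emeasure sphere_uniform {y. fst y \<in> S} =
    (\<integral>\<^sup>+\<theta>. indicator {0..pi} \<theta> * ennreal (sin \<theta> / 2) * indicator S \<theta> \<partial>lborel)"
proof -
  have m: "{y::real\<times>real. fst y \<in> S} \<in> sets borel"
  proof -
    have "{y::real\<times>real. fst y \<in> S} = fst -` S \<inter> space (borel \<Otimes>\<^sub>M borel)" by (auto simp: space_pair_measure)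
    also have "\<dots> \<in> sets (borel \<Otimes>\<^sub>M borel)" by measurable
    finally show ?thesis by (simp only: borel_prod)
  qed
  have "emeasure sphere_uniform {y. fst y \<in> S} = (\<integral>\<^sup>+y. indicator {y. fst y \<in> S} y \<partial>sphere_uniform)"
    using m by (intro nn_integral_indicator[symmetric]) simp
  also have "\<dots> = (\<integral>\<^sup>+y. indicator S (fst y) \<partial>sphere_uniform)"
    by (intro nn_integral_cong) (simp add: indicator_def)
  also have "\<dots> = (\<integral>\<^sup>+\<theta>. indicator {0..pi} \<theta> * ennreal (sin \<theta> / 2) * indicator S \<theta> \<partial>lborel)"
    by (subst su_nn_fst) auto
  finally show ?thesis .
qed

lemma FTC_sin:
  assumes "0 \<le> t" "t \<le> pi"
  shows "(\<integral>\<^sup>+\<theta>. ennreal (sin \<theta> / 2) * indicator {t..pi} \<theta> \<partial>lborel) = ennreal ((1 + cos t) / 2)"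
proof -
  have "(\<integral>\<^sup>+\<theta>. ennreal (sin \<theta> / 2) * indicator {t..pi} \<theta> \<partial>lborel) = ennreal ((- cos pi / 2) - (- cos t / 2))"
    using assms
    by (intro nn_integral_FTC_Icc) (auto intro!: derivative_eq_intros sin_ge_zero)
  then show ?thesis by (simp add: field_simps)
qed

lemma prob_su: "prob_space sphere_uniform"
proof
  have "emeasure sphere_uniform (space sphere_uniform) = emeasure sphere_uniform {y. fst y \<in> UNIV}"
    by simp
  also have "\<dots> = (\<integral>\<^sup>+\<theta>. ennreal (sin \<theta> / 2) * indicator {0..pi} \<theta> \<partial>lborel)"
    by (subst su_emeasure_fst) (auto intro!: nn_integral_cong simp: mult_ac)
  also have "\<dots> = 1" by (subst FTC_sin) auto
  finally show "emeasure sphere_uniform (space sphere_uniform) = 1" .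
qed

lemma tail_le:
  assumes "0 \<le> t" "t \<le> pi"
  shows "emeasure sphere_uniform {y. t \<le> arccos (cos (fst y))} = ennreal ((1 + cos t) / 2)"
proof -
  have eq: "{y. t \<le> arccos (cos (fst y))} = {y. fst y \<in> {\<theta>. t \<le> arccos (cos \<theta>)}}" by auto
  have "emeasure sphere_uniform {y. t \<le> arccos (cos (fst y))} = (\<integral>\<^sup>+\<theta>. ennreal (sin \<theta> / 2) * indicator {t..pi} \<theta> \<partial>lborel)"
    unfolding eq using assms by (subst su_emeasure_fst) (auto intro!: nn_integral_cong simp: indicator_def arccos_cos)
  also have "\<dots> = ennreal ((1 + cos t) / 2)" using assms by (rule FTC_sin)
  finally show ?thesis .
qed

lemma tail_lt:
  assumes "0 \<le> t" "t \<le> pi"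
  shows "emeasure sphere_uniform {y. t < arccos (cos (fst y))} = ennreal ((1 + cos t) / 2)"
proof -
  have eq: "{y. t < arccos (cos (fst y))} = {y. fst y \<in> {\<theta>. t < arccos (cos \<theta>)}}" by auto
  have "emeasure sphere_uniform {y. t < arccos (cos (fst y))} = (\<integral>\<^sup>+\<theta>. ennreal (sin \<theta> / 2) * indicator {t..pi} \<theta> \<partial>lborel)"
    unfolding eq using assms by (subst su_emeasure_fst) (auto intro!: nn_integral_cong_AE eventually_mono[OF AE_lborel_singleton[of t]] simp: indicator_def arccos_cos)
  also have "\<dots> = ennreal ((1 + cos t) / 2)" using assms by (rule FTC_sin)
  finally show ?thesis .
qed


lemma arccos_out: "\<bar>y\<bar> > 1 \<Longrightarrow> arccos y = arccos 2"
proof -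
  assume "\<bar>y\<bar> > 1"
  then have "(\<lambda>x. 0 \<le> x \<and> x \<le> pi \<and> cos x = y) = (\<lambda>x. 0 \<le> x \<and> x \<le> pi \<and> cos x = 2)"
  proof -
    have "cos x \<noteq> y" for x :: real using abs_cos_le_one[of x] \<open>\<bar>y\<bar> > 1\<close> by (metis not_le)
    moreover have "cos x \<noteq> 2" for x :: real using cos_le_one[of x] by linarith
    ultimately show ?thesis by auto
  qed
  then show ?thesis unfolding arccos_def by simp
qed

lemma arccos_borel: "arccos \<in> borel_measurable borel"
proof -
  have "arccos = (\<lambda>y. if y \<in> {-1..1} then arccos y else arccos 2)"
  proof
    fix y :: real show "arccos y = (if y \<in> {-1..1} then arccos y else arccos 2)"
      using arccos_out[of y] by (cases "y \<in> {-1..1}") auto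
  qed
  also have "\<dots> \<in> borel_measurable borel"
    by (intro borel_measurable_continuous_on_if continuous_on_arccos' continuous_on_const) auto
  finally show ?thesis .
qed

lemma borel_measurable_arccos[measurable (raw)]:
  "f \<in> borel_measurable M \<Longrightarrow> (\<lambda>x. arccos (f x)) \<in> borel_measurable M"
  using measurable_comp[OF _ arccos_borel, of f M] by (simp add: comp_def)

lemma cos_set:
  fixes c :: real
  shows "emeasure lborel {\<phi>\<in>{0..<2*pi}. c \<le> cos \<phi>} =
    ennreal (if c > 1 then 0 else if c < -1 then 2*pi else 2 * arccos c)"
proof (cases "c > 1")
  case True
  have E: "{\<phi>\<in>{0..<2*pi}. c \<le> cos \<phi>} = {}" 
  proof -
    have "\<not> c \<le> cos \<phi>" for \<phi> using cos_le_one[of \<phi>] True by linarith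
    then show ?thesis by auto
  qed
  show ?thesis unfolding E using True by simp
next
  case c1: False
  show ?thesis
  proof (cases "c \<le> -1")
    case True
    then have "{\<phi>\<in>{0..<2*pi}. c \<le> cos \<phi>} = {0..<2*pi}" 
    proof -
      have "c \<le> cos \<phi>" for \<phi> using cos_ge_minus_one[of \<phi>] True by linarith
      then show ?thesis by auto
    qed
    moreover have "2 * arccos c = 2 * pi" if "c = -1" using that by simp
    ultimately show ?thesis using True c1 by auto
  next
    case c2: False
    define \<alpha> where "\<alpha> = arccos c"
    have a0: "0 \<le> \<alpha>" "\<alpha> < pi" using c1 c2 arccos_lt_bounded[of c] arccos_lbound[of c] unfolding \<alpha>_def
      by (cases "c = 1"; simp)+
    have ca: "cos \<alpha> = c" unfolding \<alpha>_def using c1 c2 by simp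
    have eq: "{\<phi>\<in>{0..<2*pi}. c \<le> cos \<phi>} = {0..\<alpha>} \<union> {2*pi - \<alpha>..<2*pi}"
    proof (intro set_eqI iffI)
      fix \<phi> assume "\<phi> \<in> {\<phi>\<in>{0..<2*pi}. c \<le> cos \<phi>}"
      then have p: "0 \<le> \<phi>" "\<phi> < 2*pi" "cos \<alpha> \<le> cos \<phi>" using ca by auto
      show "\<phi> \<in> {0..\<alpha>} \<union> {2*pi - \<alpha>..<2*pi}"
      proof (cases "\<phi> \<le> pi")
        case True
        then have "\<phi> \<le> \<alpha>" using p a0 cos_mono_le_eq[of \<alpha> \<phi>] by auto
        then show ?thesis using p by auto
      next
        case False
        have "cos \<phi> = cos (2*pi - \<phi>)" by (simp add: cos_diff)
        then have "2*pi - \<phi> \<le> \<alpha>" using p a0 False cos_mono_le_eq[of \<alpha> "2*pi - \<phi>"] by auto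
        then show ?thesis using p by auto
      qed
    next
      fix \<phi> assume "\<phi> \<in> {0..\<alpha>} \<union> {2*pi - \<alpha>..<2*pi}"
      then consider "0 \<le> \<phi>" "\<phi> \<le> \<alpha>" | "2*pi - \<alpha> \<le> \<phi>" "\<phi> < 2*pi" by auto
      then show "\<phi> \<in> {\<phi>\<in>{0..<2*pi}. c \<le> cos \<phi>}"
      proof cases
        case 1
        then have "cos \<alpha> \<le> cos \<phi>" using a0 cos_mono_le_eq[of \<alpha> \<phi>] by auto
        then show ?thesis using 1 a0 ca by auto
      next
        case 2
        have "cos \<phi> = cos (2*pi - \<phi>)" by (simp add: cos_diff)
        moreover have "cos \<alpha> \<le> cos (2*pi - \<phi>)" using 2 a0 cos_mono_le_eq[of \<alpha> "2*pi - \<phi>"] by auto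
        ultimately show ?thesis using 2 a0 ca by auto
      qed
    qed
    have "emeasure lborel ({0..\<alpha>} \<union> {2*pi - \<alpha>..<2*pi}) = emeasure lborel {0..\<alpha>} + emeasure lborel {2*pi - \<alpha>..<2*pi}"
      using a0 by (intro plus_emeasure[symmetric]) auto
    also have "\<dots> = ennreal \<alpha> + ennreal \<alpha>" using a0 by simp
    also have "\<dots> = ennreal (2 * \<alpha>)" using a0 by (simp add: ennreal_plus[symmetric] del: ennreal_plus)
    finally show ?thesis using eq c1 c2 unfolding \<alpha>_def by simp
  qed
qed


lemma sqrt_le_sq: "0 \<le> l \<Longrightarrow> sqrt x \<le> l \<longleftrightarrow> x \<le> l\<^sup>2"
  by (metis real_sqrt_abs abs_of_nonneg real_sqrt_le_iff)

lemma sqrt_less_sq: "0 \<le> l \<Longrightarrow> sqrt x < l \<longleftrightarrow> x < l\<^sup>2"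
  by (metis real_sqrt_abs abs_of_nonneg real_sqrt_less_iff)

lemma phi_aux:
  assumes "0 < RL" "RL < RG" "0 < \<Theta>" "\<Theta> < pi" "0 < l" "0 < \<theta>" "\<theta> < pi"
  shows "\<exists>c. P_LG RL RG \<Theta> l \<theta> = (if c > 1 then 0 else if c < -1 then 1 else arccos c / pi) \<and>
      (\<forall>\<phi>. sph_dist RL (\<theta>,\<phi>) RG (\<Theta>,0) \<le> l \<longleftrightarrow> c \<le> cos \<phi>)"
proof -
  have s1: "sin \<theta> > 0" using assms by (intro sin_gt_zero) auto
  have s2: "sin \<Theta> > 0" using assms by (intro sin_gt_zero) auto
  define D where "D = 2 * RL * RG * sin \<theta> * sin \<Theta>"
  have D0: "D > 0" unfolding D_def using assms s1 s2 by simp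
  define c where "c = (RL\<^sup>2 + RG\<^sup>2 - l\<^sup>2) / (2 * RL * RG * sin \<theta> * sin \<Theta>)
                      - cos \<theta> * cos \<Theta> / (sin \<theta> * sin \<Theta>)"
  define K where "K = RL\<^sup>2 + RG\<^sup>2 - l\<^sup>2 - 2 * RL * RG * cos \<theta> * cos \<Theta>"
  have cD: "c * D = K" unfolding c_def D_def K_def using s1 s2 assms
    by (simp add: field_simps power2_eq_square)
  have key: "sph_dist RL (\<theta>,\<phi>) RG (\<Theta>,0) \<le> l \<longleftrightarrow> c \<le> cos \<phi>" for \<phi>
  proof -
    have "sph_dist RL (\<theta>,\<phi>) RG (\<Theta>,0) \<le> l \<longleftrightarrow>
        RL\<^sup>2 + RG\<^sup>2 - 2*RL*RG*(sin \<theta> * sin \<Theta> * cos \<phi> + cos \<theta> * cos \<Theta>) \<le> l\<^sup>2"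
      unfolding sph_dist_def using assms by (simp add: sqrt_le_sq)
    also have "\<dots> \<longleftrightarrow> K \<le> cos \<phi> * D" unfolding K_def D_def by (auto simp: algebra_simps)
    also have "\<dots> \<longleftrightarrow> c * D \<le> cos \<phi> * D" using cD by simp
    also have "\<dots> \<longleftrightarrow> c \<le> cos \<phi>" using D0 by simp
    finally show ?thesis .
  qed
  have d1: "sqrt (RL\<^sup>2 + RG\<^sup>2 - 2 * RL * RG * cos (\<theta> - \<Theta>)) > l \<longleftrightarrow> c > 1"
  proof -
    have "sqrt (RL\<^sup>2 + RG\<^sup>2 - 2 * RL * RG * cos (\<theta> - \<Theta>)) > l \<longleftrightarrow>
          \<not> (RL\<^sup>2 + RG\<^sup>2 - 2 * RL * RG * cos (\<theta> - \<Theta>) \<le> l\<^sup>2)"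
      using assms by (simp add: sqrt_le_sq[symmetric] not_le)
    also have "\<dots> \<longleftrightarrow> \<not> K \<le> D" unfolding K_def D_def cos_diff by (auto simp: algebra_simps)
    also have "\<dots> \<longleftrightarrow> \<not> c * D \<le> 1 * D" using cD by simp
    also have "\<dots> \<longleftrightarrow> c > 1" using D0 by (simp add: not_le)
    finally show ?thesis .
  qed
  have d2: "sqrt (RL\<^sup>2 + RG\<^sup>2 - 2 * RL * RG * cos (\<theta> + \<Theta>)) < l \<longleftrightarrow> c < -1"
  proof -
    have "sqrt (RL\<^sup>2 + RG\<^sup>2 - 2 * RL * RG * cos (\<theta> + \<Theta>)) < l \<longleftrightarrow>
          RL\<^sup>2 + RG\<^sup>2 - 2 * RL * RG * cos (\<theta> + \<Theta>) < l\<^sup>2"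
      using assms by (simp add: sqrt_less_sq)
    also have "\<dots> \<longleftrightarrow> K < - D" unfolding K_def D_def cos_add by (auto simp: algebra_simps)
    also have "\<dots> \<longleftrightarrow> c * D < (-1) * D" using cD by simp
    also have "\<dots> \<longleftrightarrow> c < -1" using D0 by (simp only: mult_less_cancel_right) auto
    finally show ?thesis .
  qed
  have P: "P_LG RL RG \<Theta> l \<theta> = (if c > 1 then 0 else if c < -1 then 1 else arccos c / pi)"
    unfolding P_LG_def Let_def d1 d2 c_def by simp
  show ?thesis using P key by blast
qed

lemma phi_meas:
  assumes "0 < RL" "RL < RG" "0 < \<Theta>" "\<Theta> < pi" "0 < l" "0 < \<theta>" "\<theta> < pi"
  shows "emeasure lborel {\<phi>\<in>{0..<2*pi}. sph_dist RL (\<theta>,\<phi>) RG (\<Theta>,0) \<le> l}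
      = ennreal (2*pi * P_LG RL RG \<Theta> l \<theta>)"
proof -
  obtain c where P: "P_LG RL RG \<Theta> l \<theta> = (if c > 1 then 0 else if c < -1 then 1 else arccos c / pi)"
    and key: "\<And>\<phi>. sph_dist RL (\<theta>,\<phi>) RG (\<Theta>,0) \<le> l \<longleftrightarrow> c \<le> cos \<phi>"
    using phi_aux[OF assms] by blast
  have "{\<phi>\<in>{0..<2*pi}. sph_dist RL (\<theta>,\<phi>) RG (\<Theta>,0) \<le> l} = {\<phi>\<in>{0..<2*pi}. c \<le> cos \<phi>}"
    using key by auto
  then show ?thesis using cos_set[of c] unfolding P by auto
qed

lemma P_LG_range:
  assumes "0 < RL" "RL < RG" "0 < \<Theta>" "\<Theta> < pi" "0 < l" "0 < \<theta>" "\<theta> < pi"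
  shows "0 \<le> P_LG RL RG \<Theta> l \<theta> \<and> P_LG RL RG \<Theta> l \<theta> \<le> 1"
proof -
  obtain c where P: "P_LG RL RG \<Theta> l \<theta> = (if c > 1 then 0 else if c < -1 then 1 else arccos c / pi)"
    using phi_aux[OF assms] by blast
  show ?thesis
  proof (cases "c > 1 \<or> c < -1")
    case True then show ?thesis unfolding P by auto
  next
    case False
    then have "0 \<le> arccos c" "arccos c \<le> pi" using arccos_lbound arccos_ubound by auto
    then show ?thesis unfolding P using False by auto
  qed
qed


interpretation su: prob_space sphere_uniform by (rule prob_su)

interpretation ps: product_sigma_finite "\<lambda>_::nat. sphere_uniform"
  by (simp add: product_sigma_finite_def su.sigma_finite_measure_axioms)

lemma sets_su2[measurable_cong]: "sets sphere_uniform = sets (borel \<Otimes>\<^sub>M borel)"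
  by (subst borel_prod) simp

definition aa :: "real \<times> real \<Rightarrow> real" where "aa y = arccos (cos (fst y))"

lemma aa_meas[measurable]: "aa \<in> borel_measurable (borel \<Otimes>\<^sub>M borel)"
  unfolding aa_def by measurable

lemma aa_range: "0 \<le> aa y \<and> aa y \<le> pi"
  unfolding aa_def by (intro arccos_bounded) auto

definition EE :: "nat \<Rightarrow> (real \<times> real) set \<Rightarrow> nat \<Rightarrow> (nat \<Rightarrow> real \<times> real) set" where
  "EE N B i = {\<omega> \<in> space (PiM {..<N} (\<lambda>_. sphere_uniform)). \<omega> i \<in> B \<and>
      (\<forall>j\<in>{..<N}. aa (\<omega> i) \<le> aa (\<omega> j)) \<and> (\<forall>j\<in>{..<i}. aa (\<omega> i) < aa (\<omega> j))}"

lemma EE_sets: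
  assumes [measurable]: "B \<in> sets (borel \<Otimes>\<^sub>M borel)" and i: "i < N"
  shows "EE N B i \<in> sets (PiM {..<N} (\<lambda>_. sphere_uniform))"
proof -
  have [measurable]: "(\<lambda>\<omega>. \<omega> j) \<in> measurable (PiM {..<N} (\<lambda>_. sphere_uniform)) sphere_uniform" if "j < N" for j
    using that by (intro measurable_component_singleton) auto
  have c: "(\<lambda>\<omega>. aa (\<omega> j)) \<in> borel_measurable (PiM {..<N} (\<lambda>_. sphere_uniform))" if "j < N" for j
  proof -
    have m1: "(\<lambda>\<omega>. \<omega> j) \<in> measurable (PiM {..<N} (\<lambda>_. sphere_uniform)) sphere_uniform"
      using that by (intro measurable_component_singleton) auto
    have m2: "aa \<in> borel_measurable sphere_uniform"
      by (subst measurable_cong_sets[OF sets_su2 refl]) (rule aa_meas)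
    show ?thesis using measurable_compose[OF m1 m2] .
  qed
  have p1: "Measurable.pred (PiM {..<N} (\<lambda>_. sphere_uniform)) (\<lambda>\<omega>. \<forall>j\<in>{..<N}. aa (\<omega> i) \<le> aa (\<omega> j))"
  proof (rule pred_intros_finite)
    fix j assume "j \<in> {..<N}"
    then show "Measurable.pred (PiM {..<N} (\<lambda>_. sphere_uniform)) (\<lambda>\<omega>. aa (\<omega> i) \<le> aa (\<omega> j))"
      unfolding Measurable.pred_def using borel_measurable_le[OF c[OF i] c[of j]] by simp
  qed simp
  have p2: "Measurable.pred (PiM {..<N} (\<lambda>_. sphere_uniform)) (\<lambda>\<omega>. \<forall>j\<in>{..<i}. aa (\<omega> i) < aa (\<omega> j))"
  proof (rule pred_intros_finite)
    fix j assume "j \<in> {..<i}"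
    then have "j < N" using i by auto
    then show "Measurable.pred (PiM {..<N} (\<lambda>_. sphere_uniform)) (\<lambda>\<omega>. aa (\<omega> i) < aa (\<omega> j))"
      using borel_measurable_pred_less[OF c[OF i] c[of j]] by simp
  qed simp
  have p0: "Measurable.pred (PiM {..<N} (\<lambda>_. sphere_uniform)) (\<lambda>\<omega>. \<omega> i \<in> B)"
  proof -
    have m: "(\<lambda>\<omega>. \<omega> i) \<in> measurable (PiM {..<N} (\<lambda>_. sphere_uniform)) sphere_uniform"
      using i by (intro measurable_component_singleton) auto
    have "B \<in> sets sphere_uniform" using sets_su2 by simp
    from measurable_sets[OF m this]
    have "(\<lambda>\<omega>. \<omega> i) -` B \<inter> space (PiM {..<N} (\<lambda>_. sphere_uniform)) \<in> sets (PiM {..<N} (\<lambda>_. sphere_uniform))" .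
    moreover have "{\<omega> \<in> space (PiM {..<N} (\<lambda>_. sphere_uniform)). \<omega> i \<in> B} = (\<lambda>\<omega>. \<omega> i) -` B \<inter> space (PiM {..<N} (\<lambda>_. sphere_uniform))" by auto
    ultimately show ?thesis unfolding Measurable.pred_def by simp
  qed
  show ?thesis unfolding EE_def using p0 p1 p2 by measurable
qed

lemma EE_key:
  assumes i: "i < N" and x: "x \<in> space (PiM ({..<N} - {i}) (\<lambda>_::nat. sphere_uniform))"
  shows "x(i:=y) \<in> EE N B i \<longleftrightarrow> y \<in> B \<and> x \<in> PiE ({..<N} - {i})
     (\<lambda>j. if j < i then {z. aa y < aa z} else {z. aa y \<le> aa z})"
proof -
  have xe: "x \<in> PiE ({..<N} - {i}) (\<lambda>_. UNIV)" using x by (simp add: space_PiM)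
  have xi: "x(i:=y) \<in> space (PiM {..<N} (\<lambda>_::nat. sphere_uniform))"
    using xe i by (auto simp: space_PiM PiE_iff extensional_def)
  show ?thesis
  proof
    assume "x(i:=y) \<in> EE N B i"
    then have h: "y \<in> B" "\<forall>j\<in>{..<N}. aa y \<le> aa ((x(i:=y)) j)" "\<forall>j\<in>{..<i}. aa y < aa ((x(i:=y)) j)"
      unfolding EE_def by auto
    have "x \<in> PiE ({..<N} - {i}) (\<lambda>j. if j < i then {z. aa y < aa z} else {z. aa y \<le> aa z})"
    proof (rule PiE_I)
      fix j assume j: "j \<in> {..<N} - {i}"
      then show "x j \<in> (if j < i then {z. aa y < aa z} else {z. aa y \<le> aa z})"
        using h(2,3) by (auto split: if_splits)
    next
      fix j assume "j \<notin> {..<N} - {i}" then show "x j = undefined" using xe by (auto simp: PiE_iff extensional_def)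
    qed
    then show "y \<in> B \<and> x \<in> PiE ({..<N} - {i}) (\<lambda>j. if j < i then {z. aa y < aa z} else {z. aa y \<le> aa z})"
      using h by auto
  next
    assume h: "y \<in> B \<and> x \<in> PiE ({..<N} - {i}) (\<lambda>j. if j < i then {z. aa y < aa z} else {z. aa y \<le> aa z})"
    have 1: "\<forall>j\<in>{..<N}. aa y \<le> aa ((x(i:=y)) j)"
    proof
      fix j assume j: "j \<in> {..<N}"
      show "aa y \<le> aa ((x(i:=y)) j)"
      proof (cases "j = i")
        case False
        then have "x j \<in> (if j < i then {z. aa y < aa z} else {z. aa y \<le> aa z})" using h j by (auto simp: PiE_iff)
        then show ?thesis using False by (auto split: if_splits)
      qed simp
    qed
    have 2: "\<forall>j\<in>{..<i}. aa y < aa ((x(i:=y)) j)"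
    proof
      fix j assume j: "j \<in> {..<i}"
      then have "j \<in> {..<N} - {i}" using i by auto
      then have "x j \<in> (if j < i then {z. aa y < aa z} else {z. aa y \<le> aa z})" using h by (auto simp: PiE_iff)
      then show "aa y < aa ((x(i:=y)) j)" using j by auto
    qed
    show "x(i:=y) \<in> EE N B i" unfolding EE_def using xi h 1 2 by auto
  qed
qed

lemma tail_set:
  assumes "0 \<le> t" "t \<le> pi"
  shows "emeasure sphere_uniform {z. t < aa z} = ennreal ((1 + cos t) / 2)"
    "emeasure sphere_uniform {z. t \<le> aa z} = ennreal ((1 + cos t) / 2)"
  using tail_lt[OF assms] tail_le[OF assms] unfolding aa_def by auto

lemma aa_sets: "{z. t < aa z} \<in> sets sphere_uniform" "{z. t \<le> aa z} \<in> sets sphere_uniform"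
proof -
  have "{z \<in> space (borel \<Otimes>\<^sub>M borel). t < aa z} \<in> sets (borel \<Otimes>\<^sub>M borel)"
       "{z \<in> space (borel \<Otimes>\<^sub>M borel). t \<le> aa z} \<in> sets (borel \<Otimes>\<^sub>M borel)"
    by measurable
  then have "{z. t < aa z} \<in> sets (borel \<Otimes>\<^sub>M borel)" "{z. t \<le> aa z} \<in> sets (borel \<Otimes>\<^sub>M borel)"
    by (simp_all add: space_pair_measure)
  then show "{z. t < aa z} \<in> sets sphere_uniform" "{z. t \<le> aa z} \<in> sets sphere_uniform"
    by (simp_all only: sets_su2)
qed

lemma one_cos_nonneg: "0 \<le> 1 + cos (t::real)"
  using cos_ge_minus_one[of t] by linarith

lemma half_nonneg: "0 \<le> (1 + cos (t::real)) / 2"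
  by (rule divide_nonneg_pos[OF one_cos_nonneg]) simp

lemma EE_emeasure:
  assumes B[measurable]: "B \<in> sets (borel \<Otimes>\<^sub>M borel)" and i: "i < N"
  shows "emeasure (PiM {..<N} (\<lambda>_. sphere_uniform)) (EE N B i)
     = (\<integral>\<^sup>+y. indicator B y * ennreal (((1 + cos (aa y)) / 2) ^ (N - 1)) \<partial>sphere_uniform)"
proof -
  define I where "I = {..<N} - {i}"
  have NI: "{..<N} = insert i I" "i \<notin> I" "finite I" using i I_def by auto
  have cI: "card I = N - 1" using i unfolding I_def by simp
  define S where "S = (\<lambda>y j. if j < i then {z. aa y < aa z} else {z. aa y \<le> aa z})"
  have Ssets: "S y j \<in> sets sphere_uniform" for y j unfolding S_def using aa_sets by auto
  have Smeas: "emeasure sphere_uniform (S y j) = ennreal ((1 + cos (aa y)) / 2)" for y j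
    unfolding S_def using tail_set aa_range by auto
  have Em: "EE N B i \<in> sets (PiM {..<N} (\<lambda>_. sphere_uniform))" using EE_sets[OF B i] .
  have "emeasure (PiM {..<N} (\<lambda>_. sphere_uniform)) (EE N B i) =
      (\<integral>\<^sup>+\<omega>. indicator (EE N B i) \<omega> \<partial>(PiM {..<N} (\<lambda>_. sphere_uniform)))"
    using Em by (rule nn_integral_indicator[symmetric])
  also have "\<dots> = (\<integral>\<^sup>+y. \<integral>\<^sup>+x. indicator (EE N B i) (x(i:=y)) \<partial>(PiM I (\<lambda>_. sphere_uniform)) \<partial>sphere_uniform)"
    unfolding NI(1) using NI Em[unfolded NI(1)] by (intro ps.product_nn_integral_insert_rev) auto
  also have "\<dots> = (\<integral>\<^sup>+y. indicator B y * ennreal (((1 + cos (aa y)) / 2) ^ (N - 1)) \<partial>sphere_uniform)"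
  proof (rule nn_integral_cong)
    fix y
    have "(\<integral>\<^sup>+x. indicator (EE N B i) (x(i:=y)) \<partial>(PiM I (\<lambda>_. sphere_uniform)))
       = (\<integral>\<^sup>+x. indicator B y * (indicator (PiE I (S y)) x :: ennreal) \<partial>(PiM I (\<lambda>_. sphere_uniform)))"
    proof (rule nn_integral_cong)
      fix x assume "x \<in> space (PiM I (\<lambda>_. sphere_uniform))"
      then have x': "x \<in> space (PiM ({..<N} - {i}) (\<lambda>_::nat. sphere_uniform))" by (simp add: I_def)
      have Sy: "(\<lambda>j. if j < i then {z. aa y < aa z} else {z. aa y \<le> aa z}) = S y" by (simp add: S_def)
      have k: "x(i:=y) \<in> EE N B i \<longleftrightarrow> y \<in> B \<and> x \<in> PiE I (S y)"
        using EE_key[OF i x', of y B] unfolding Sy I_def .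
      show "indicator (EE N B i) (x(i:=y)) = (indicator B y * indicator (PiE I (S y)) x :: ennreal)"
        unfolding k indicator_def by (cases "y \<in> B"; cases "x \<in> PiE I (S y)") simp_all
    qed
    also have "\<dots> = indicator B y * emeasure (PiM I (\<lambda>_. sphere_uniform)) (PiE I (S y))"
      using NI Ssets by (intro nn_integral_cmult_indicator sets_PiM_I_finite) auto
    also have "\<dots> = indicator B y * (\<Prod>j\<in>I. emeasure sphere_uniform (S y j))"
      using NI Ssets by (subst ps.emeasure_PiM) auto
    also have "\<dots> = indicator B y * ennreal (((1 + cos (aa y)) / 2) ^ (N - 1))"
    proof -
      have "0 \<le> (1 + cos (aa y)) / (2::real)" by (rule half_nonneg)
      then show ?thesis using cI by (simp add: Smeas ennreal_power)
    qed
    finally show "(\<integral>\<^sup>+x. indicator (EE N B i) (x(i:=y)) \<partial>(PiM I (\<lambda>_. sphere_uniform)))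
       = indicator B y * ennreal (((1 + cos (aa y)) / 2) ^ (N - 1))" .
  qed
  finally show ?thesis .
qed


lemma ca_aa: "central_angle (0,0) x = aa x"
  unfolding central_angle_def aa_def by simp

lemma relay_char:
  assumes N: "N \<ge> 1"
  shows "relay N \<omega> < N"
    "relay N \<omega> = i \<longleftrightarrow> i < N \<and> (\<forall>j\<in>{..<N}. aa (\<omega> i) \<le> aa (\<omega> j)) \<and> (\<forall>j\<in>{..<i}. aa (\<omega> i) < aa (\<omega> j))"
proof -
  define P where "P = (\<lambda>i. i < N \<and> (\<forall>j<N. aa (\<omega> i) \<le> aa (\<omega> j)))"
  have r: "relay N \<omega> = (LEAST i. P i)" unfolding relay_def P_def ca_aa ..
  have "0 \<in> {..<N}" using N by simp
  then have ne: "(\<lambda>j. aa (\<omega> j)) ` {..<N} \<noteq> {}" by blast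
  obtain m where m: "m \<in> {..<N}" "aa (\<omega> m) = Min ((\<lambda>j. aa (\<omega> j)) ` {..<N})"
    using Min_in[OF _ ne] by auto
  have "P m" unfolding P_def using m by auto
  then have Pr: "P (relay N \<omega>)" unfolding r by (rule LeastI)
  then show "relay N \<omega> < N" unfolding P_def by auto
  show "relay N \<omega> = i \<longleftrightarrow> i < N \<and> (\<forall>j\<in>{..<N}. aa (\<omega> i) \<le> aa (\<omega> j)) \<and> (\<forall>j\<in>{..<i}. aa (\<omega> i) < aa (\<omega> j))"
  proof
    assume ri: "relay N \<omega> = i"
    have Pi: "P i" using Pr ri by simp
    have "aa (\<omega> i) < aa (\<omega> j)" if j: "j < i" for j
    proof -
      have "\<not> P j" using not_less_Least[of j P] j ri r by simp
      moreover have "j < N" using j Pi unfolding P_def by auto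
      ultimately obtain k where "k < N" "aa (\<omega> k) < aa (\<omega> j)" unfolding P_def by (auto simp: not_le)
      moreover have "aa (\<omega> i) \<le> aa (\<omega> k)" using Pi \<open>k < N\<close> unfolding P_def by auto
      ultimately show ?thesis by linarith
    qed
    then show "i < N \<and> (\<forall>j\<in>{..<N}. aa (\<omega> i) \<le> aa (\<omega> j)) \<and> (\<forall>j\<in>{..<i}. aa (\<omega> i) < aa (\<omega> j))"
      using Pi unfolding P_def by auto
  next
    assume h: "i < N \<and> (\<forall>j\<in>{..<N}. aa (\<omega> i) \<le> aa (\<omega> j)) \<and> (\<forall>j\<in>{..<i}. aa (\<omega> i) < aa (\<omega> j))"
    show "relay N \<omega> = i" unfolding r
    proof (rule Least_equality)
      show "P i" using h unfolding P_def by auto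
    next
      fix j assume "P j"
      show "i \<le> j"
      proof (rule ccontr)
        assume "\<not> i \<le> j"
        then have "aa (\<omega> i) < aa (\<omega> j)" using h by auto
        moreover have "aa (\<omega> j) \<le> aa (\<omega> i)" using \<open>P j\<close> h unfolding P_def by auto
        ultimately show False by linarith
      qed
    qed
  qed
qed

lemma inner:
  assumes "0 < RL" "RL < RG" "0 < \<Theta>" "\<Theta> < pi" "0 < lmax" "0 \<le> tmax" "tmax \<le> pi"
  shows "(\<integral>\<^sup>+\<phi>. indicator ({0..pi} \<times> {0..<2*pi}) (\<theta>, \<phi>) * ennreal (sin \<theta> / (4*pi)) *
           (indicator {x. aa x \<le> tmax \<and> sph_dist RL x RG (\<Theta>, 0) \<le> lmax} (\<theta>, \<phi>) *
            ennreal (((1 + cos (aa (\<theta>, \<phi>))) / 2) ^ (N - 1))) \<partial>lborel)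
       = ennreal (sin \<theta> / 2 * ((1 + cos \<theta>) / 2) ^ (N - 1) * P_LG RL RG \<Theta> lmax \<theta>) * indicator {0..tmax} \<theta>"
proof (cases "\<theta> \<in> {0..tmax}")
  case False
  have "indicator ({0..pi} \<times> {0..<2*pi}) (\<theta>, \<phi>) * ennreal (sin \<theta> / (4*pi)) *
           (indicator {x. aa x \<le> tmax \<and> sph_dist RL x RG (\<Theta>, 0) \<le> lmax} (\<theta>, \<phi>) *
            ennreal (((1 + cos (aa (\<theta>, \<phi>))) / 2) ^ (N - 1))) = 0" for \<phi>
  proof (cases "\<theta> \<in> {0..pi}")
    case True
    then have "aa (\<theta>, \<phi>) = \<theta>" unfolding aa_def by (simp add: arccos_cos)
    then show ?thesis using False True by (simp add: indicator_def)
  qed (auto simp: indicator_def)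
  note z = this
  show ?thesis by (simp only: z) (use False in simp)
next
  case True
  then have t: "0 \<le> \<theta>" "\<theta> \<le> pi" "\<theta> \<le> tmax" using assms by auto
  have aa_t: "aa (\<theta>, \<phi>) = \<theta>" for \<phi> unfolding aa_def using t by (simp add: arccos_cos)
  define c where "c = sin \<theta> / (4*pi) * ((1 + cos \<theta>) / 2) ^ (N - 1)"
  have c0: "0 \<le> c" unfolding c_def using t sin_ge_zero half_nonneg by auto
  define S where "S = {\<phi> \<in> space borel. \<phi> \<in> {0..<2*pi} \<and> sph_dist RL (\<theta>, \<phi>) RG (\<Theta>, 0) \<le> lmax}"
  have Sm: "S \<in> sets lborel" unfolding S_def sph_dist_def by measurable
  have "(\<integral>\<^sup>+\<phi>. indicator ({0..pi} \<times> {0..<2*pi}) (\<theta>, \<phi>) * ennreal (sin \<theta> / (4*pi)) *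
           (indicator {x. aa x \<le> tmax \<and> sph_dist RL x RG (\<Theta>, 0) \<le> lmax} (\<theta>, \<phi>) *
            ennreal (((1 + cos (aa (\<theta>, \<phi>))) / 2) ^ (N - 1))) \<partial>lborel)
      = (\<integral>\<^sup>+\<phi>. ennreal c * indicator S \<phi> \<partial>lborel)"
  proof (rule nn_integral_cong)
    fix \<phi>
    have "ennreal c = ennreal (sin \<theta> / (4*pi)) * ennreal (((1 + cos \<theta>) / 2) ^ (N - 1))"
      unfolding c_def using t sin_ge_zero half_nonneg by (intro ennreal_mult) auto
    then show "indicator ({0..pi} \<times> {0..<2*pi}) (\<theta>, \<phi>) * ennreal (sin \<theta> / (4*pi)) *
           (indicator {x. aa x \<le> tmax \<and> sph_dist RL x RG (\<Theta>, 0) \<le> lmax} (\<theta>, \<phi>) *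
            ennreal (((1 + cos (aa (\<theta>, \<phi>))) / 2) ^ (N - 1))) = ennreal c * indicator S \<phi>"
      using t unfolding S_def by (auto simp: indicator_def mult_ac aa_t)
  qed
  also have "\<dots> = ennreal c * emeasure lborel S" using Sm by (rule nn_integral_cmult_indicator)
  also have "\<dots> = ennreal (sin \<theta> / 2 * ((1 + cos \<theta>) / 2) ^ (N - 1) * P_LG RL RG \<Theta> lmax \<theta>)"
  proof (cases "\<theta> = 0 \<or> \<theta> = pi")
    case True
    then show ?thesis unfolding c_def by auto
  next
    case False
    then have t2: "0 < \<theta>" "\<theta> < pi" using t by auto
    have "S = {\<phi>\<in>{0..<2*pi}. sph_dist RL (\<theta>,\<phi>) RG (\<Theta>,0) \<le> lmax}" unfolding S_def by auto
    then have "emeasure lborel S = ennreal (2*pi * P_LG RL RG \<Theta> lmax \<theta>)"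
      using phi_meas[OF assms(1-5) t2] by simp
    moreover have "0 \<le> P_LG RL RG \<Theta> lmax \<theta>" using P_LG_range[OF assms(1-5) t2] by simp
    ultimately have "ennreal c * emeasure lborel S = ennreal (c * (2*pi * P_LG RL RG \<Theta> lmax \<theta>))"
      using c0 by (simp add: ennreal_mult)
    then show ?thesis unfolding c_def by (simp add: field_simps)
  qed
  finally show ?thesis using True by simp
qed


lemma F_bounds:
  assumes "0 < RL" "RL < RG" "0 < \<Theta>" "\<Theta> < pi" "0 < lmax" "0 \<le> \<theta>" "\<theta> \<le> pi"
  shows "0 \<le> f_theta_IL N \<theta> * P_LG RL RG \<Theta> lmax \<theta> \<and> f_theta_IL N \<theta> * P_LG RL RG \<Theta> lmax \<theta> \<le> real N"
proof (cases "\<theta> = 0 \<or> \<theta> = pi")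
  case True then show ?thesis unfolding f_theta_IL_def by auto
next
  case False
  then have t: "0 < \<theta>" "\<theta> < pi" using assms by auto
  have P: "0 \<le> P_LG RL RG \<Theta> lmax \<theta>" "P_LG RL RG \<Theta> lmax \<theta> \<le> 1" using P_LG_range[OF assms(1-5) t] by auto
  have s: "0 \<le> sin \<theta>" "sin \<theta> \<le> 1" using t by (auto intro: sin_ge_zero)
  have h: "0 \<le> ((1 + cos \<theta>) / 2) ^ (N - 1)" "((1 + cos \<theta>) / 2) ^ (N - 1) \<le> 1"
    using half_nonneg[of \<theta>] cos_le_one[of \<theta>] by (auto intro!: power_le_one)
  have f0: "0 \<le> f_theta_IL N \<theta>" unfolding f_theta_IL_def using s h by auto
  have "f_theta_IL N \<theta> \<le> real N * 1 / 2 * 1" unfolding f_theta_IL_def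
    using s h by (intro mult_mono divide_right_mono) auto
  then have f1: "f_theta_IL N \<theta> \<le> real N" by simp
  have "f_theta_IL N \<theta> * P_LG RL RG \<Theta> lmax \<theta> \<le> real N * 1"
    using f0 f1 P by (intro mult_mono) auto
  then show ?thesis using f0 P by auto
qed

lemma F_meas[measurable]: "(\<lambda>\<theta>. f_theta_IL N \<theta> * P_LG RL RG \<Theta> lmax \<theta>) \<in> borel_measurable borel"
  unfolding f_theta_IL_def P_LG_def Let_def by measurable

lemma final_integral:
  assumes "0 < RL" "RL < RG" "0 < \<Theta>" "\<Theta> < pi" "0 < lmax" "0 \<le> tmax" "tmax \<le> pi"
  shows "(\<integral>\<^sup>+\<theta>. ennreal (f_theta_IL N \<theta> * P_LG RL RG \<Theta> lmax \<theta>) * indicator {0..tmax} \<theta> \<partial>lborel)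
    = ennreal (integral {0..tmax} (\<lambda>\<theta>. f_theta_IL N \<theta> * P_LG RL RG \<Theta> lmax \<theta>))"
    and "0 \<le> integral {0..tmax} (\<lambda>\<theta>. f_theta_IL N \<theta> * P_LG RL RG \<Theta> lmax \<theta>)"
proof -
  let ?F = "\<lambda>\<theta>. f_theta_IL N \<theta> * P_LG RL RG \<Theta> lmax \<theta>"
  have b: "\<theta> \<in> {0..tmax} \<Longrightarrow> 0 \<le> ?F \<theta> \<and> ?F \<theta> \<le> real N" for \<theta>
    using F_bounds[OF assms(1-5)] assms by auto
  have "set_integrable lborel {0..tmax} ?F"
    unfolding set_integrable_def
    by (rule integrableI_bounded_set_indicator[where B="real N"]) (use b assms in auto)
  then have "?F integrable_on {0..tmax}" by (rule set_borel_integral_eq_integral(1))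
  then have hi: "(?F has_integral integral {0..tmax} ?F) {0..tmax}" by (rule integrable_integral)
  show "(\<integral>\<^sup>+\<theta>. ennreal (?F \<theta>) * indicator {0..tmax} \<theta> \<partial>lborel) = ennreal (integral {0..tmax} ?F)"
    using b by (intro nn_integral_has_integral_lebesgue' hi) auto
  show "0 \<le> integral {0..tmax} ?F"
    using b by (intro integral_nonneg \<open>?F integrable_on {0..tmax}\<close>) auto
qed


theorem theorem1:
  fixes RE RL RG \<Theta> lILmax lLGmax :: real and N :: nat
  assumes "0 < RE" "RE < RL" "RL < RG"
    and "N \<ge> 1"
    and "0 < \<Theta>" "\<Theta> < pi"
    and "RL - RE \<le> lILmax" "lILmax \<le> sqrt (RL\<^sup>2 - RE\<^sup>2)"
    and "lLGmax > 0"
  shows "let \<theta>max = arccos ((RL\<^sup>2 + RE\<^sup>2 - lILmax\<^sup>2) / (2 * RL * RE));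
             \<theta>IL = (\<lambda>\<omega>. central_angle (0,0) (\<omega> (relay N \<omega>)));
             lLG = (\<lambda>\<omega>. sph_dist RL (\<omega> (relay N \<omega>)) RG (\<Theta>, 0))
         in measure (leo_sats N) {\<omega> \<in> space (leo_sats N). \<theta>IL \<omega> \<le> \<theta>max \<and> lLG \<omega> \<le> lLGmax}
            = integral {0..\<theta>max} (\<lambda>\<theta>. f_theta_IL N \<theta> * P_LG RL RG \<Theta> lLGmax \<theta>)"
proof -
  define q where "q = (RL\<^sup>2 + RE\<^sup>2 - lILmax\<^sup>2) / (2 * RL * RE)"
  define tmax where "tmax = arccos q"
  have RL0: "0 < RL" using assms by linarith
  have l0: "0 \<le> lILmax" using assms by linarith
  have "(RL - RE)\<^sup>2 \<le> lILmax\<^sup>2" using assms by (intro power_mono) auto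
  then have q1: "q \<le> 1" unfolding q_def using assms RL0
    by (simp add: divide_le_eq power2_eq_square algebra_simps)
  have "lILmax\<^sup>2 \<le> (sqrt (RL\<^sup>2 - RE\<^sup>2))\<^sup>2" using assms l0 by (intro power_mono) auto
  also have "\<dots> = RL\<^sup>2 - RE\<^sup>2" using assms by (intro real_sqrt_pow2) (simp add: power_strict_mono)
  finally have l2: "lILmax\<^sup>2 \<le> RL\<^sup>2 - RE\<^sup>2" .
  have "0 \<le> RE\<^sup>2" by simp
  then have "0 \<le> RL\<^sup>2 + RE\<^sup>2 - lILmax\<^sup>2" using l2 by linarith
  then have q0: "0 \<le> q" unfolding q_def using assms RL0 by simp
  have tm: "0 \<le> tmax" "tmax \<le> pi" unfolding tmax_def using q0 q1 by (auto intro: arccos_lbound arccos_ubound)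
  define h where "h = (\<lambda>t::real. ((1 + cos t) / 2) ^ (N - 1))"
  define B where "B = {x. aa x \<le> tmax \<and> sph_dist RL x RG (\<Theta>, 0) \<le> lLGmax}"
  have Bm[measurable]: "B \<in> sets (borel \<Otimes>\<^sub>M borel)"
  proof -
    have "{x \<in> space (borel \<Otimes>\<^sub>M borel). aa x \<le> tmax \<and> sph_dist RL x RG (\<Theta>, 0) \<le> lLGmax} \<in> sets (borel \<Otimes>\<^sub>M borel)"
      unfolding sph_dist_def by measurable
    then show ?thesis unfolding B_def by (simp add: space_pair_measure)
  qed
  have Pmeas[measurable]: "(\<lambda>\<theta>. P_LG RL RG \<Theta> lLGmax \<theta>) \<in> borel_measurable borel"
    unfolding P_LG_def Let_def by measurable
  define Pm where "Pm = PiM {..<N} (\<lambda>_::nat. sphere_uniform)"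
  have lP: "leo_sats N = Pm" unfolding leo_sats_def Pm_def ..
  define T where "T = {\<omega> \<in> space Pm. central_angle (0,0) (\<omega> (relay N \<omega>)) \<le> tmax \<and>
       sph_dist RL (\<omega> (relay N \<omega>)) RG (\<Theta>, 0) \<le> lLGmax}"
  have T_eq: "T = (\<Union>i\<in>{..<N}. EE N B i)"
  proof (intro set_eqI iffI)
    fix \<omega> assume "\<omega> \<in> T"
    then have w: "\<omega> \<in> space Pm" "\<omega> (relay N \<omega>) \<in> B" unfolding T_def B_def ca_aa by auto
    have "relay N \<omega> < N" using relay_char(1)[OF assms(4)] .
    moreover have "\<omega> \<in> EE N B (relay N \<omega>)"
      using relay_char(2)[OF assms(4), of \<omega> "relay N \<omega>"] w unfolding EE_def Pm_def by auto
    ultimately show "\<omega> \<in> (\<Union>i\<in>{..<N}. EE N B i)" by auto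
  next
    fix \<omega> assume "\<omega> \<in> (\<Union>i\<in>{..<N}. EE N B i)"
    then obtain i where i: "i < N" "\<omega> \<in> EE N B i" by auto
    then have "relay N \<omega> = i" using relay_char(2)[OF assms(4), of \<omega> i] unfolding EE_def by auto
    then show "\<omega> \<in> T" using i unfolding T_def EE_def B_def Pm_def ca_aa by auto
  qed
  have disj: "disjoint_family_on (EE N B) {..<N}"
    unfolding disjoint_family_on_def
  proof (intro ballI impI)
    fix i j assume ij: "i \<in> {..<N}" "j \<in> {..<N}" "i \<noteq> j"
    show "EE N B i \<inter> EE N B j = {}"
    proof (rule ccontr)
      assume "EE N B i \<inter> EE N B j \<noteq> {}"
      then obtain \<omega> where w: "\<omega> \<in> EE N B i" "\<omega> \<in> EE N B j" by blast
      have "relay N \<omega> = i" using relay_char(2)[OF assms(4), of \<omega> i] w(1) ij unfolding EE_def by auto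
      moreover have "relay N \<omega> = j" using relay_char(2)[OF assms(4), of \<omega> j] w(2) ij unfolding EE_def by auto
      ultimately show False using ij by simp
    qed
  qed
  define V where "V = (\<integral>\<^sup>+y. indicator B y * ennreal (h (aa y)) \<partial>sphere_uniform)"
  have "emeasure Pm T = (\<Sum>i\<in>{..<N}. emeasure Pm (EE N B i))"
    unfolding T_eq using disj EE_sets[OF Bm] unfolding Pm_def by (intro sum_emeasure[symmetric]) auto
  also have "\<dots> = (\<Sum>i\<in>{..<N}. V)"
    unfolding Pm_def V_def h_def by (intro sum.cong refl EE_emeasure[OF Bm]) auto
  also have "\<dots> = ennreal (real N) * V" by (simp add: ennreal_of_nat_eq_real_of_nat)
  finally have eT: "emeasure Pm T = ennreal (real N) * V" .
  let ?G = "\<lambda>\<theta>. sin \<theta> / 2 * ((1 + cos \<theta>) / 2) ^ (N - 1) * P_LG RL RG \<Theta> lLGmax \<theta>"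
  have "V = (\<integral>\<^sup>+\<theta>. \<integral>\<^sup>+\<phi>. indicator ({0..pi} \<times> {0..<2*pi}) (\<theta>, \<phi>) * ennreal (sin \<theta> / (4*pi)) *
           (indicator B (\<theta>, \<phi>) * ennreal (h (aa (\<theta>, \<phi>)))) \<partial>lborel \<partial>lborel)"
    unfolding V_def h_def using Bm by (intro su_nn) measurable
  also have "\<dots> = (\<integral>\<^sup>+\<theta>. ennreal (?G \<theta>) * indicator {0..tmax} \<theta> \<partial>lborel)"
    unfolding B_def h_def using assms RL0 tm by (intro nn_integral_cong inner) auto
  finally have eV: "V = (\<integral>\<^sup>+\<theta>. ennreal (?G \<theta>) * indicator {0..tmax} \<theta> \<partial>lborel)" .
  have "ennreal (real N) * V = (\<integral>\<^sup>+\<theta>. ennreal (real N) * (ennreal (?G \<theta>) * indicator {0..tmax} \<theta>) \<partial>lborel)"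
    unfolding eV by (rule nn_integral_cmult[symmetric]) measurable
  also have "\<dots> = (\<integral>\<^sup>+\<theta>. ennreal (f_theta_IL N \<theta> * P_LG RL RG \<Theta> lLGmax \<theta>) * indicator {0..tmax} \<theta> \<partial>lborel)"
  proof (rule nn_integral_cong)
    fix \<theta>
    have "ennreal (real N) * ennreal (?G \<theta>) = ennreal (real N * ?G \<theta>)" by (rule ennreal_mult'[symmetric]) simp
    also have "real N * ?G \<theta> = f_theta_IL N \<theta> * P_LG RL RG \<Theta> lLGmax \<theta>" unfolding f_theta_IL_def by simp
    finally show "ennreal (real N) * (ennreal (?G \<theta>) * indicator {0..tmax} \<theta>) =
        ennreal (f_theta_IL N \<theta> * P_LG RL RG \<Theta> lLGmax \<theta>) * indicator {0..tmax} \<theta>"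
      by (simp add: mult.assoc[symmetric])
  qed
  also have "\<dots> = ennreal (integral {0..tmax} (\<lambda>\<theta>. f_theta_IL N \<theta> * P_LG RL RG \<Theta> lLGmax \<theta>))"
    using assms RL0 tm by (intro final_integral(1)) auto
  finally have "emeasure Pm T = ennreal (integral {0..tmax} (\<lambda>\<theta>. f_theta_IL N \<theta> * P_LG RL RG \<Theta> lLGmax \<theta>))"
    using eT by simp
  moreover have "0 \<le> integral {0..tmax} (\<lambda>\<theta>. f_theta_IL N \<theta> * P_LG RL RG \<Theta> lLGmax \<theta>)"
    using assms RL0 tm by (intro final_integral(2)) auto
  ultimately have "measure Pm T = integral {0..tmax} (\<lambda>\<theta>. f_theta_IL N \<theta> * P_LG RL RG \<Theta> lLGmax \<theta>)"
    unfolding measure_def by simp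
  then show ?thesis unfolding Let_def lP T_def tmax_def q_def .
qed


end
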